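(* Let $\underline x<\overline x$ and $g\in C^2([\underline x,\overline x])$ satisfy conditions (G1)–(G5) below. 1. The minimizer $(\hat m(x),\hat s_1(x),\hat s_2(x))$ of the infimum in (G2) is well defined for every $x\in[\underline x,\overline x]$. 2. Let $\hat\alpha(x)=\alpha(\hat m(x),\hat s_1(x),\hat s_2(x))$, and define $\hat\beta,\hat\gamma,\hat\theta_1,\hat\theta_2$ analogously. Then the functions $\hat\alpha$, $\hat\beta$, $\hat\gamma$, $\hat\theta_1$, $\hat\theta_2$, $\frac{\hat s_1(x)}{g'(x)}$, $\frac{\hat s_2(x)}{g'(x)}$ and $\frac{\hat\beta(x)}{g'(x)}$ are Lipschitz on $[\underline x,\overline x]$. 3. For $x\in[\underline x,\overline x]$, $$-\hat\alpha(x)g'(x)-\big(\hat m(x)+\hat\beta(x)\big)+\hat\gamma(x)\Big(\frac{x}{g'(x)}\Big)'=0.$$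
   Context: Parameters. - $\rho\in(-1,1)$. - $\mu_1,\mu_2,\sigma_1,\sigma_2>0$. - $\overline\lambda>0$ and $\underline\lambda\in(0,1)$. - $p\in(-\infty,1)\setminus\{0\}$, with $q=p/(1-p)$ and $\operatorname{sgn}(p)$ the sign of $p$. - $\delta>0$. Standing assumption: $$\delta>\frac{q}{2(1-\rho^2)}\Big(\big(\tfrac{\mu_1}{\sigma_1}\big)^2+\big(\tfrac{\mu_2}{\sigma_2}\big)^2-2\rho\tfrac{\mu_1\mu_2}{\sigma_1\sigma_2}\Big),\qquad \mu_1\ne\tfrac{\rho\mu_2\sigma_1}{\sigma_2},\qquad \mu_2\ne\tfrac{\rho\sigma_1\sigma_2}{1+q}.$$ Functions. For $m,s_1,s_2\in\mathbb R$ with $s_1\ne-\sigma_1$, define $$\theta_1(m,s_1,s_2)=\tfrac{\rho(\sigma_2s_2-\mu_2)}{(1-\rho^2)\sigma_2}-\tfrac{\mu_2s_2-(m+\mu_1+s_1\sigma_1+\frac12(s_1^2+s_2^2))\sigma_2}{(1-\rho^2)\sigma_2(s_1+\sigma_1)},\qquad \theta_2=\tfrac{\mu_2}{\sigma_2}-\rho\theta_1,$$ $$\alpha=(1+q)\delta-\tfrac{q(1+q)}2(\theta_1^2+\theta_2^2+2\rho\theta_1\theta_2),\qquad \beta=q\big((s_1+\rho s_2)\theta_1+(\rho s_1+s_2)\theta_2\big),\qquad \gamma=\tfrac12(s_1^2+s_2^2+2\rho s_1s_2).$$ Conditions (G1)–(G5) on $\underline x<\overline x$ and $g\in C^2([\underline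 x,\overline x])$: - (G1) if $\mu_1>\rho\mu_2\sigma_1/\sigma_2$ then $0<\underline x<\overline x$; if $\mu_1<\rho\mu_2\sigma_1/\sigma_2$ then $\underline x<\overline x<0$. - (G2) for $x\in[\underline x,\overline x]$, $$\inf_{m,s_1,s_2}\{-\alpha g(x)-(m+\beta)x+\gamma\tfrac{x}{g'(x)}+\operatorname{sgn}(p)\}=0.$$ - (G3) $g'(\underline x)=g'(\overline x)=0$ and $\int_{\underline x}^{\overline x}\frac{g'(x)}x\,dx=\log\frac{1+\overline\lambda}{1-\underline\lambda}$. - (G4) $q\,g(x)$, $q\,g(x)(g'(x)+1)-(1+q)xg'(x)$, $q(g(x)-xg'(x))$ and $g'(x)+1$ are strictly positive on $[\underline x,\overline x]$. - (G5) $g'(x)/x>0$ on $(\underline x,\overline x)$. *)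

theory Defs
  imports "HOL-Analysis.Analysis"
begin

definition qq :: "real \<Rightarrow> real" where
  "qq p = p / (1 - p)"

definition theta1 :: "real \<Rightarrow> real \<Rightarrow> real \<Rightarrow> real \<Rightarrow> real \<Rightarrow> real \<Rightarrow> real \<Rightarrow> real \<Rightarrow> real" where
  "theta1 \<rho> \<mu>1 \<mu>2 \<sigma>1 \<sigma>2 m s1 s2 =
     \<rho> * (\<sigma>2 * s2 - \<mu>2) / ((1 - \<rho>^2) * \<sigma>2)
     - (\<mu>2 * s2 - (m + \<mu>1 + s1 * \<sigma>1 + (s1^2 + s2^2) / 2) * \<sigma>2)
       / ((1 - \<rho>^2) * \<sigma>2 * (s1 + \<sigma>1))"

definition theta2 :: "real \<Rightarrow> real \<Rightarrow> real \<Rightarrow> real \<Rightarrow> real \<Rightarrow> real \<Rightarrow> real \<Rightarrow> real \<Rightarrow> real" where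
  "theta2 \<rho> \<mu>1 \<mu>2 \<sigma>1 \<sigma>2 m s1 s2 = \<mu>2 / \<sigma>2 - \<rho> * theta1 \<rho> \<mu>1 \<mu>2 \<sigma>1 \<sigma>2 m s1 s2"

definition alpha :: "real \<Rightarrow> real \<Rightarrow> real \<Rightarrow> real \<Rightarrow> real \<Rightarrow> real \<Rightarrow> real \<Rightarrow> real \<Rightarrow> real \<Rightarrow> real \<Rightarrow> real" where
  "alpha \<rho> \<mu>1 \<mu>2 \<sigma>1 \<sigma>2 q \<delta> m s1 s2 =
     (let t1 = theta1 \<rho> \<mu>1 \<mu>2 \<sigma>1 \<sigma>2 m s1 s2; t2 = theta2 \<rho> \<mu>1 \<mu>2 \<sigma>1 \<sigma>2 m s1 s2
      in (1 + q) * \<delta> - q * (1 + q) / 2 * (t1^2 + t2^2 + 2 * \<rho> * t1 * t2))"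

definition beta :: "real \<Rightarrow> real \<Rightarrow> real \<Rightarrow> real \<Rightarrow> real \<Rightarrow> real \<Rightarrow> real \<Rightarrow> real \<Rightarrow> real \<Rightarrow> real" where
  "beta \<rho> \<mu>1 \<mu>2 \<sigma>1 \<sigma>2 q m s1 s2 =
     q * ((s1 + \<rho> * s2) * theta1 \<rho> \<mu>1 \<mu>2 \<sigma>1 \<sigma>2 m s1 s2
          + (\<rho> * s1 + s2) * theta2 \<rho> \<mu>1 \<mu>2 \<sigma>1 \<sigma>2 m s1 s2)"

definition gamma :: "real \<Rightarrow> real \<Rightarrow> real \<Rightarrow> real" where
  "gamma \<rho> s1 s2 = (s1^2 + s2^2 + 2 * \<rho> * s1 * s2) / 2"

text \<open>The objective in (G2), evaluated at a point x with g(x) = gx and g'(x) = dgx.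
  It is extended-real valued: where g'(x) = 0 (only at the endpoints, by (G5)), the
  quotient x/g'(x) is read as +infinity (its limit from the interior by (G5)), with the
  convention 0 * infinity = 0.\<close>
definition G2obj :: "real \<Rightarrow> real \<Rightarrow> real \<Rightarrow> real \<Rightarrow> real \<Rightarrow> real \<Rightarrow> real \<Rightarrow> real \<Rightarrow> real \<Rightarrow> real
                     \<Rightarrow> real \<Rightarrow> real \<Rightarrow> real \<Rightarrow> ereal" where
  "G2obj \<rho> \<mu>1 \<mu>2 \<sigma>1 \<sigma>2 p \<delta> gx dgx x m s1 s2 =
     (let a = alpha \<rho> \<mu>1 \<mu>2 \<sigma>1 \<sigma>2 (qq p) \<delta> m s1 s2;
          b = beta \<rho> \<mu>1 \<mu>2 \<sigma>1 \<sigma>2 (qq p) m s1 s2;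
          c = gamma \<rho> s1 s2
      in if dgx = 0 then
           (if c = 0 then ereal (- a * gx - (m + b) * x + sgn p) else PInfty)
         else ereal (- a * gx - (m + b) * x + c * (x / dgx) + sgn p))"

end

theory Submission
  imports Defs
begin


definition Mf where
 "Mf \<rho> \<mu>1 \<mu>2 \<sigma>1 \<sigma>2 t s1 s2 = (1-\<rho>^2)*(s1+\<sigma>1)*t + s2*(\<mu>2/\<sigma>2-\<rho>*\<sigma>1)
   + s1*(\<rho>*(\<mu>2/\<sigma>2)-\<sigma>1) + \<rho>*(\<mu>2/\<sigma>2)*\<sigma>1 - \<mu>1 - gamma \<rho> s1 s2"

lemma m_eq:
  assumes "s1 + \<sigma>1 \<noteq> 0" "\<sigma>2 \<noteq> 0" "1 - \<rho>^2 \<noteq> 0"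
  shows "m = Mf \<rho> \<mu>1 \<mu>2 \<sigma>1 \<sigma>2 (theta1 \<rho> \<mu>1 \<mu>2 \<sigma>1 \<sigma>2 m s1 s2) s1 s2"
proof -
  define t where "t = theta1 \<rho> \<mu>1 \<mu>2 \<sigma>1 \<sigma>2 m s1 s2"
  define r2 where "r2 = 1 - \<rho>^2"
  have r2: "r2 \<noteq> 0" using assms r2_def by simp
  have "t = \<rho> * (\<sigma>2 * s2 - \<mu>2) / (r2 * \<sigma>2)
     - (\<mu>2 * s2 - (m + \<mu>1 + s1 * \<sigma>1 + (s1^2 + s2^2) / 2) * \<sigma>2) / (r2 * \<sigma>2 * (s1 + \<sigma>1))"
    unfolding t_def theta1_def r2_def ..
  hence "r2 * \<sigma>2 * (s1 + \<sigma>1) * t = \<rho> * (\<sigma>2 * s2 - \<mu>2) * (s1 + \<sigma>1)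
     - (\<mu>2 * s2 - (m + \<mu>1 + s1 * \<sigma>1 + (s1^2 + s2^2) / 2) * \<sigma>2)"
  proof -
    let ?D = "r2 * \<sigma>2 * (s1 + \<sigma>1)"
    have hD: "?D \<noteq> 0" using r2 assms by simp
    have e1: "?D * (\<rho> * (\<sigma>2 * s2 - \<mu>2) / (r2 * \<sigma>2)) = \<rho> * (\<sigma>2 * s2 - \<mu>2) * (s1 + \<sigma>1)"
      using r2 assms by (simp add: field_simps)
    have e2: "?D * ((\<mu>2 * s2 - (m + \<mu>1 + s1 * \<sigma>1 + (s1^2 + s2^2) / 2) * \<sigma>2) / ?D)
       = (\<mu>2 * s2 - (m + \<mu>1 + s1 * \<sigma>1 + (s1^2 + s2^2) / 2) * \<sigma>2)"
      using hD by simp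
    assume "t = \<rho> * (\<sigma>2 * s2 - \<mu>2) / (r2 * \<sigma>2)
     - (\<mu>2 * s2 - (m + \<mu>1 + s1 * \<sigma>1 + (s1^2 + s2^2) / 2) * \<sigma>2) / (r2 * \<sigma>2 * (s1 + \<sigma>1))"
    hence "?D * t = ?D * (\<rho> * (\<sigma>2 * s2 - \<mu>2) / (r2 * \<sigma>2))
     - ?D * ((\<mu>2 * s2 - (m + \<mu>1 + s1 * \<sigma>1 + (s1^2 + s2^2) / 2) * \<sigma>2) / ?D)"
      by (simp add: right_diff_distrib)
    thus ?thesis using e1 e2 by simp
  qed
  hence "m * \<sigma>2 = r2 * \<sigma>2 * (s1 + \<sigma>1) * t - \<rho> * (\<sigma>2 * s2 - \<mu>2) * (s1 + \<sigma>1) + \<mu>2 * s2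
          - (\<mu>1 + s1 * \<sigma>1 + (s1^2 + s2^2) / 2) * \<sigma>2" by (simp add: algebra_simps)
  hence "m = (r2 * \<sigma>2 * (s1 + \<sigma>1) * t - \<rho> * (\<sigma>2 * s2 - \<mu>2) * (s1 + \<sigma>1) + \<mu>2 * s2
          - (\<mu>1 + s1 * \<sigma>1 + (s1^2 + s2^2) / 2) * \<sigma>2) / \<sigma>2" using assms(2) by (simp add: field_simps)
  also have "\<dots> = Mf \<rho> \<mu>1 \<mu>2 \<sigma>1 \<sigma>2 t s1 s2"
    unfolding Mf_def gamma_def r2_def using assms(2) by (simp add: field_simps power2_eq_square)
  finally show ?thesis unfolding t_def .
qed

lemma Mf_inj:
  assumes "s1 + \<sigma>1 \<noteq> 0" "1 - \<rho>^2 \<noteq> 0"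
    and "Mf \<rho> \<mu>1 \<mu>2 \<sigma>1 \<sigma>2 t s1 s2 = Mf \<rho> \<mu>1 \<mu>2 \<sigma>1 \<sigma>2 t' s1 s2"
  shows "t = t'"
proof -
  have "(1-\<rho>^2)*(s1+\<sigma>1)*t = (1-\<rho>^2)*(s1+\<sigma>1)*t'" using assms(3) unfolding Mf_def by simp
  thus ?thesis using assms(1,2) by simp
qed

lemma theta_M:
  assumes "s1 + \<sigma>1 \<noteq> 0" "\<sigma>2 \<noteq> 0" "1 - \<rho>^2 \<noteq> 0"
  shows "theta1 \<rho> \<mu>1 \<mu>2 \<sigma>1 \<sigma>2 (Mf \<rho> \<mu>1 \<mu>2 \<sigma>1 \<sigma>2 t s1 s2) s1 s2 = t"
  using Mf_inj[OF assms(1,3) m_eq[OF assms, of "Mf \<rho> \<mu>1 \<mu>2 \<sigma>1 \<sigma>2 t s1 s2" \<mu>1 \<mu>2 s2, symmetric]] .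

lemma alpha_t:
  "alpha \<rho> \<mu>1 \<mu>2 \<sigma>1 \<sigma>2 q \<delta> m s1 s2 = (1+q)*\<delta> - q*(1+q)/2*((1-\<rho>^2)*(theta1 \<rho> \<mu>1 \<mu>2 \<sigma>1 \<sigma>2 m s1 s2)^2 + (\<mu>2/\<sigma>2)^2)"
  unfolding alpha_def theta2_def Let_def by (simp add: algebra_simps power2_eq_square)

lemma beta_t:
  "beta \<rho> \<mu>1 \<mu>2 \<sigma>1 \<sigma>2 q m s1 s2 = q*((1-\<rho>^2)* s1*theta1 \<rho> \<mu>1 \<mu>2 \<sigma>1 \<sigma>2 m s1 s2 + (\<mu>2/\<sigma>2)*(\<rho>* s1+s2))"
  unfolding beta_def theta2_def by (simp add: algebra_simps power2_eq_square)

definition Phi where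
 "Phi \<rho> \<mu>1 \<mu>2 \<sigma>1 \<sigma>2 q \<delta> sp G x cp t s1 s2 =
   (let k = (cp + x)/2; P = q*(1+q)*G/2; R = x*(1+q); a = \<mu>2/\<sigma>2; K2 = a*(1+q) - \<rho>*\<sigma>1; u = s2 + \<rho>* s1
    in (1-\<rho>^2)*(P*t^2 - R*t* s1 - x*\<sigma>1*t + x*\<sigma>1* s1 + k* s1^2) + k*u^2 - x*K2*u
       + (-(1+q)*\<delta>*G + q*(1+q)/2*G*a^2 - x*(\<rho>*a*\<sigma>1 - \<mu>1) + sp))"

lemma obj_Phi:
  assumes "s1 + \<sigma>1 \<noteq> 0" "\<sigma>2 \<noteq> 0" "1 - \<rho>^2 \<noteq> 0"
  shows "- alpha \<rho> \<mu>1 \<mu>2 \<sigma>1 \<sigma>2 q \<delta> m s1 s2 * G - (m + beta \<rho> \<mu>1 \<mu>2 \<sigma>1 \<sigma>2 q m s1 s2) * x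
          + gamma \<rho> s1 s2 * cp + sp
        = Phi \<rho> \<mu>1 \<mu>2 \<sigma>1 \<sigma>2 q \<delta> sp G x cp (theta1 \<rho> \<mu>1 \<mu>2 \<sigma>1 \<sigma>2 m s1 s2) s1 s2"
proof -
  define t where "t = theta1 \<rho> \<mu>1 \<mu>2 \<sigma>1 \<sigma>2 m s1 s2"
  have m: "m = Mf \<rho> \<mu>1 \<mu>2 \<sigma>1 \<sigma>2 t s1 s2" using m_eq[OF assms] t_def by simp
  define a where "a = \<mu>2/\<sigma>2"
  show ?thesis unfolding alpha_t beta_t t_def[symmetric] a_def[symmetric]
    apply (subst m)+
    unfolding Mf_def Phi_def Let_def gamma_def a_def[symmetric]
    by (simp add: field_simps power2_eq_square)
qed


definition LIP :: "real set \<Rightarrow> (real \<Rightarrow> real) \<Rightarrow> bool" where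
  "LIP S f \<longleftrightarrow> (\<exists>L. L-lipschitz_on S f)"

lemma LIP_const[simp,intro]: "LIP S (\<lambda>x. c)"
  unfolding LIP_def using lipschitz_on_constant by blast

lemma LIP_id[simp,intro]: "LIP S (\<lambda>x. x)"
  unfolding LIP_def using lipschitz_on_id by blast

lemma LIP_add[intro]: "LIP S f \<Longrightarrow> LIP S g \<Longrightarrow> LIP S (\<lambda>x. f x + g x)"
  unfolding LIP_def using lipschitz_on_add by blast

lemma LIP_diff[intro]: "LIP S f \<Longrightarrow> LIP S g \<Longrightarrow> LIP S (\<lambda>x. f x - g x)"
  unfolding LIP_def using lipschitz_on_diff by blast

lemma LIP_subset: "LIP S f \<Longrightarrow> T \<subseteq> S \<Longrightarrow> LIP T f"
  unfolding LIP_def using lipschitz_on_subset by blast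

lemma LIP_cong: "LIP S f \<Longrightarrow> (\<And>x. x \<in> S \<Longrightarrow> g x = f x) \<Longrightarrow> LIP S g"
  unfolding LIP_def using lipschitz_on_transform by blast

lemma LIP_cont: "LIP S f \<Longrightarrow> continuous_on S f"
  unfolding LIP_def using lipschitz_on_continuous_on by blast

lemma LIP_bounded:
  assumes "LIP S f" "compact S"
  shows "\<exists>B. \<forall>x\<in>S. \<bar>f x\<bar> \<le> B"
proof -
  have "compact (f ` S)" using compact_continuous_image[OF LIP_cont[OF assms(1)] assms(2)] .
  then obtain B where "\<forall>y\<in>f ` S. norm y \<le> B" using compact_imp_bounded bounded_iff by metis
  thus ?thesis by auto
qed

lemma LIP_mult[intro]:
  assumes "LIP S f" "LIP S g" "compact S"
  shows "LIP S (\<lambda>x. f x * g x)"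
proof -
  obtain Lf where Lf: "Lf-lipschitz_on S f" using assms unfolding LIP_def by blast
  obtain Lg where Lg: "Lg-lipschitz_on S g" using assms unfolding LIP_def by blast
  obtain Bf where Bf: "\<forall>x\<in>S. \<bar>f x\<bar> \<le> Bf" using LIP_bounded assms by blast
  obtain Bg where Bg: "\<forall>x\<in>S. \<bar>g x\<bar> \<le> Bg" using LIP_bounded assms by blast
  have Lf0: "Lf \<ge> 0" "Lg \<ge> 0" using Lf Lg lipschitz_on_nonneg by blast+
  show ?thesis unfolding LIP_def
  proof (intro exI lipschitz_onI)
    fix x y assume xy: "x \<in> S" "y \<in> S"
    have "f x * g x - f y * g y = f x * (g x - g y) + g y * (f x - f y)" by (simp add: algebra_simps)
    hence "\<bar>f x * g x - f y * g y\<bar> \<le> \<bar>f x\<bar> * \<bar>g x - g y\<bar> + \<bar>g y\<bar> * \<bar>f x - f y\<bar>"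
      by (metis abs_mult abs_triangle_ineq)
    also have "\<dots> \<le> (max Bf 0) * (Lg * \<bar>x - y\<bar>) + (max Bg 0) * (Lf * \<bar>x - y\<bar>)"
    proof (rule add_mono; rule mult_mono)
      show "\<bar>g x - g y\<bar> \<le> Lg * \<bar>x - y\<bar>" using lipschitz_onD[OF Lg xy] by (simp add: dist_real_def)
      show "\<bar>f x - f y\<bar> \<le> Lf * \<bar>x - y\<bar>" using lipschitz_onD[OF Lf xy] by (simp add: dist_real_def)
    qed (use Bf Bg xy Lf0 in auto)
    finally show "dist (f x * g x) (f y * g y) \<le> (max Bf 0 * Lg + max Bg 0 * Lf) * dist x y"
      by (simp add: dist_real_def algebra_simps)
  qed (use Lf0 in auto)
qed

lemma LIP_inverse:
  assumes "LIP S h" "compact S" "\<forall>x\<in>S. h x > 0"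
  shows "LIP S (\<lambda>x. 1 / h x)"
proof (cases "S = {}")
  case True thus ?thesis unfolding LIP_def by (auto intro: lipschitz_onI)
next
  case False
  obtain x0 where x0: "x0 \<in> S" "\<forall>y\<in>S. h x0 \<le> h y"
    using continuous_attains_inf[OF assms(2) False LIP_cont[OF assms(1)]] by blast
  define e where "e = h x0"
  have e: "e > 0" using x0 assms(3) e_def by auto
  obtain L where L: "L-lipschitz_on S h" using assms unfolding LIP_def by blast
  have L0: "L \<ge> 0" using L lipschitz_on_nonneg by blast
  show ?thesis unfolding LIP_def
  proof (intro exI lipschitz_onI)
    fix x y assume xy: "x \<in> S" "y \<in> S"
    have hx: "h x \<ge> e" "h y \<ge> e" using x0 xy e_def by auto
    have "1 / h x - 1 / h y = (h y - h x) / (h x * h y)" using hx e by (simp add: field_simps)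
    hence "\<bar>1 / h x - 1 / h y\<bar> = \<bar>h y - h x\<bar> / (h x * h y)" using hx e by simp
    also have "\<dots> \<le> \<bar>h y - h x\<bar> / (e * e)"
      apply (rule divide_left_mono) using hx e by (auto intro: mult_mono)
    also have "\<dots> \<le> (L * \<bar>x - y\<bar>) / (e * e)"
      apply (rule divide_right_mono) using lipschitz_onD[OF L xy] e by (auto simp: dist_real_def abs_minus_commute)
    finally show "dist (1 / h x) (1 / h y) \<le> (L / (e*e)) * dist x y" by (simp add: dist_real_def)
  qed (use L0 e in auto)
qed

lemma LIP_divide:
  assumes "LIP S f" "LIP S h" "compact S" "\<forall>x\<in>S. h x > 0"
  shows "LIP S (\<lambda>x. f x / h x)"
  using LIP_mult[OF assms(1) LIP_inverse[OF assms(2-4)] assms(3)] by simp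

lemma LIP_C1:
  assumes "a \<le> b" "\<forall>x\<in>{a..b}. (f has_real_derivative f' x) (at x within {a..b})"
    "continuous_on {a..b} f'"
  shows "LIP {a..b} f"
proof -
  obtain B where B: "\<forall>x\<in>{a..b}. \<bar>f' x\<bar> \<le> B"
    using compact_continuous_image[OF assms(3)] compact_imp_bounded bounded_iff
    by (metis compact_Icc image_eqI real_norm_def)
  have "(max B 0)-lipschitz_on {a..b} f"
  proof (rule bounded_derivative_imp_lipschitz)
    fix x assume x: "x \<in> {a..b}"
    show "(f has_derivative (*) (f' x)) (at x within {a..b})"
      using assms(2) x has_field_derivative_imp_has_derivative by blast
    show "onorm ((*) (f' x)) \<le> max B 0"
      apply (rule onorm_le) using B x by (auto simp: abs_mult intro!: mult_right_mono order_trans[OF _ max.cobounded1])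
  qed auto
  thus ?thesis unfolding LIP_def by blast
qed



lemma quad2:
  fixes P R k Lt Ls th sh t s :: real
  assumes P: "P > 0" and D: "R^2 < 4*P*k" and st1: "2*P*th - R* sh + Lt = 0" and st2: "-R*th + 2*k* sh + Ls = 0"
  shows "P*th^2 - R*th* sh + k* sh^2 + Lt*th + Ls* sh \<le> P*t^2 - R*t* s + k* s^2 + Lt*t + Ls* s"
    and "P*t^2 - R*t* s + k* s^2 + Lt*t + Ls* s \<le> P*th^2 - R*th* sh + k* sh^2 + Lt*th + Ls* sh \<Longrightarrow> t = th \<and> s = sh"
proof -
  have Lt: "Lt = R* sh - 2*P*th" and Ls: "Ls = R*th - 2*k* sh" using st1 st2 by algebra+
  define dt where "dt = t - th"
  define ds where "ds = s - sh"
  have diff: "(P*t^2 - R*t* s + k* s^2 + Lt*t + Ls* s) - (P*th^2 - R*th* sh + k* sh^2 + Lt*th + Ls* sh)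
     = P*dt^2 - R*dt*ds + k*ds^2"
    unfolding Lt Ls dt_def ds_def by (simp add: algebra_simps power2_eq_square)
  have id4: "4*P*(P*dt^2 - R*dt*ds + k*ds^2) = (2*P*dt - R*ds)^2 + (4*P*k - R^2)*ds^2"
    by (simp add: algebra_simps power2_eq_square)
  have nn: "(2*P*dt - R*ds)^2 + (4*P*k - R^2)*ds^2 \<ge> 0" using D by (intro add_nonneg_nonneg) auto
  hence Qnn: "P*dt^2 - R*dt*ds + k*ds^2 \<ge> 0" using id4 P
    by (metis mult_pos_pos zero_less_numeral zero_le_mult_iff not_less)
  thus "P*th^2 - R*th* sh + k* sh^2 + Lt*th + Ls* sh \<le> P*t^2 - R*t* s + k* s^2 + Lt*t + Ls* s"
    using diff by linarith
  assume "P*t^2 - R*t* s + k* s^2 + Lt*t + Ls* s \<le> P*th^2 - R*th* sh + k* sh^2 + Lt*th + Ls* sh"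
  hence "P*dt^2 - R*dt*ds + k*ds^2 = 0" using diff Qnn by linarith
  hence "(2*P*dt - R*ds)^2 + (4*P*k - R^2)*ds^2 = 0" using id4 by simp
  hence "(2*P*dt - R*ds)^2 = 0" "(4*P*k - R^2)*ds^2 = 0"
    using D by (smt (verit) mult_nonneg_nonneg zero_le_power2)+
  hence "ds = 0" "2*P*dt - R*ds = 0" using D by auto
  hence "dt = 0" using P by simp
  thus "t = th \<and> s = sh" using \<open>ds = 0\<close> dt_def ds_def by simp
qed

lemma quad1:
  fixes k L u uh :: real
  assumes "k > 0" "2*k*uh + L = 0"
  shows "k*uh^2 + L*uh \<le> k*u^2 + L*u"
    and "k*u^2 + L*u \<le> k*uh^2 + L*uh \<Longrightarrow> u = uh"
proof -
  have L: "L = -2*k*uh" using assms by algebra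
  have diff: "(k*u^2 + L*u) - (k*uh^2 + L*uh) = k*(u-uh)^2" unfolding L by (simp add: algebra_simps power2_eq_square)
  thus "k*uh^2 + L*uh \<le> k*u^2 + L*u" using assms by (smt (verit) mult_nonneg_nonneg zero_le_power2)
  assume "k*u^2 + L*u \<le> k*uh^2 + L*uh"
  hence "k*(u-uh)^2 = 0" using diff assms by (smt (verit) mult_nonneg_nonneg zero_le_power2)
  thus "u = uh" using assms by simp
qed

lemma Phi_split:
  fixes q :: real
  shows   "Phi \<rho> \<mu>1 \<mu>2 \<sigma>1 \<sigma>2 q \<delta> sp G x cp t s1 s2 =
     (1-\<rho>^2) * ((q*(1+q)*G/2)*t^2 - (x*(1+q))*t* s1 + ((cp+x)/2)* s1^2 + (-x*\<sigma>1)*t + (x*\<sigma>1)* s1)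
     + (((cp+x)/2)*(s2 + \<rho>* s1)^2 + (-x*((\<mu>2/\<sigma>2)*(1+q) - \<rho>*\<sigma>1))*(s2 + \<rho>* s1))
     + (-(1+q)*\<delta>*G + q*(1+q)/2*G*(\<mu>2/\<sigma>2)^2 - x*(\<rho>*(\<mu>2/\<sigma>2)*\<sigma>1 - \<mu>1) + sp)"
  unfolding Phi_def Let_def by (simp add: field_simps)



lemma min_interior:
  fixes \<rho> \<mu>1 \<mu>2 \<sigma>1 \<sigma>2 q \<delta> sp G x D N th s1h s2h t s1 s2 :: real
  assumes r: "-1 < \<rho>" "\<rho> < 1" and pos: "\<sigma>2 > 0" and q: "1 + q > 0"
    and D: "D \<noteq> 0" "x / D > 0" "1 + D > 0" and N: "N > 0" "N = q*G*(1+D) - (1+q)*x*D"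
    and th: "th = x*\<sigma>1*(1-q*D)/((1+q)*N)"
    and s1h: "s1h = D*(((1+q)*th - \<sigma>1)/(1+D))"
    and s2h: "s2h = ((\<mu>2/\<sigma>2)*(1+q) - \<rho>*\<sigma>1)*D/(1+D) - \<rho>* s1h"
  shows "Phi \<rho> \<mu>1 \<mu>2 \<sigma>1 \<sigma>2 q \<delta> sp G x (x/D) th s1h s2h \<le> Phi \<rho> \<mu>1 \<mu>2 \<sigma>1 \<sigma>2 q \<delta> sp G x (x/D) t s1 s2"
    and "Phi \<rho> \<mu>1 \<mu>2 \<sigma>1 \<sigma>2 q \<delta> sp G x (x/D) t s1 s2 \<le> Phi \<rho> \<mu>1 \<mu>2 \<sigma>1 \<sigma>2 q \<delta> sp G x (x/D) th s1h s2h
           \<Longrightarrow> t = th \<and> s1 = s1h \<and> s2 = s2h"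
proof -
  define P where "P = q*(1+q)*G/2"
  define R where "R = x*(1+q)"
  define k where "k = (x/D + x)/2"
  define K2 where "K2 = (\<mu>2/\<sigma>2)*(1+q) - \<rho>*\<sigma>1"
  define uh where "uh = K2*D/(1+D)"
  have r2: "1 - \<rho>^2 > 0" using r by (simp add: abs_square_less_1)
  have xne: "x \<noteq> 0" using D by auto
  have k2: "2*k = x*(1+D)/D" unfolding k_def using D by (simp add: field_simps)
  have kpos: "k > 0"
  proof -
    have "x*(1+D)/D = (x/D)*(1+D)" by simp
    thus ?thesis using k2 D by (smt (verit) mult_pos_pos)
  qed
  have disc_id: "4*P*k - R^2 = (1+q)*(x/D)*N"
    unfolding P_def R_def k_def N(2) using D by (simp add: field_simps power2_eq_square)
  have disc: "R^2 < 4*P*k" using disc_id q D N by (smt (verit) mult_pos_pos)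
  have Ppos: "P > 0"
  proof (rule ccontr)
    assume "\<not> P > 0" hence "4*P*k \<le> 0" using kpos by (simp add: mult_nonpos_nonneg)
    thus False using disc by (smt (verit) zero_le_power2)
  qed
  have hN: "(1+q)*N \<noteq> 0" using q N by simp
  have thN: "(1+q)*N*th = x*\<sigma>1*(1-q*D)" unfolding th using hN by simp
  have e1: "(1+D)*(2*P*th - R* s1h + (-x*\<sigma>1)) = (1+q)*N*th - x*\<sigma>1*(1-q*D)"
    unfolding P_def R_def s1h N(2) using D by (simp add: field_simps)
  have st1: "2*P*th - R* s1h + (-x*\<sigma>1) = 0" using e1 thN D by simp
  have hw: "x*(1+D)/D*(D*(w/(1+D))) = x*w" for w
  proof -
    have "x*(1+D)/D*(D*(w/(1+D))) = x*((1+D)*(w/(1+D)))" using D by simp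
    also have "\<dots> = x*w" using D by simp
    finally show ?thesis .
  qed
  have st2: "-R*th + 2*k* s1h + x*\<sigma>1 = 0"
    unfolding k2 R_def s1h hw by (simp add: algebra_simps)
  have "2*k*uh = x*(1+D)/D*(D*(K2/(1+D)))" unfolding k2 uh_def by (simp add: ac_simps)
  also have "\<dots> = x*K2" by (rule hw)
  finally have "2*k*uh = x*K2" .
  hence stu: "2*k*uh + (-x*K2) = 0" by simp
  have uh: "s2h + \<rho>* s1h = uh" unfolding s2h uh_def K2_def by simp
  note Q2 = quad2[OF Ppos disc st1 st2]
  note Q1 = quad1[OF kpos stu]
  let ?f = "\<lambda>t s. P*t^2 - R*t* s + k* s^2 + (-x*\<sigma>1)*t + (x*\<sigma>1)* s"
  let ?h = "\<lambda>u. k*u^2 + (-x*K2)*u"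
  define C0 where "C0 = -(1+q)*\<delta>*G + q*(1+q)/2*G*(\<mu>2/\<sigma>2)^2 - x*(\<rho>*(\<mu>2/\<sigma>2)*\<sigma>1 - \<mu>1) + sp"
  have PS: "\<And>t s1 s2. Phi \<rho> \<mu>1 \<mu>2 \<sigma>1 \<sigma>2 q \<delta> sp G x (x/D) t s1 s2 = (1-\<rho>^2) * ?f t s1 + ?h (s2 + \<rho>* s1) + C0"
    unfolding Phi_split P_def R_def k_def K2_def C0_def by simp
  have f1: "?f th s1h \<le> ?f t s1" using Q2(1) .
  have h1: "?h uh \<le> ?h (s2 + \<rho>* s1)" using Q1(1) .
  have f1': "(1-\<rho>^2) * ?f th s1h \<le> (1-\<rho>^2) * ?f t s1" using f1 r2 by (simp add: mult_left_mono)
  show "Phi \<rho> \<mu>1 \<mu>2 \<sigma>1 \<sigma>2 q \<delta> sp G x (x/D) th s1h s2h \<le> Phi \<rho> \<mu>1 \<mu>2 \<sigma>1 \<sigma>2 q \<delta> sp G x (x/D) t s1 s2"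
    unfolding PS[of th] PS[of t] uh using f1' h1 by linarith
  assume le: "Phi \<rho> \<mu>1 \<mu>2 \<sigma>1 \<sigma>2 q \<delta> sp G x (x/D) t s1 s2 \<le> Phi \<rho> \<mu>1 \<mu>2 \<sigma>1 \<sigma>2 q \<delta> sp G x (x/D) th s1h s2h"
  hence le2: "(1-\<rho>^2) * ?f t s1 + ?h (s2 + \<rho>* s1) \<le> (1-\<rho>^2) * ?f th s1h + ?h uh"
    unfolding PS[of th] PS[of t] uh by linarith
  have b: "?h (s2 + \<rho>* s1) \<le> ?h uh" using le2 f1' by linarith
  have "(1-\<rho>^2) * ?f t s1 \<le> (1-\<rho>^2) * ?f th s1h" using le2 h1 by linarith
  hence a: "?f t s1 \<le> ?f th s1h" using r2 by simp
  have "t = th \<and> s1 = s1h" using Q2(2)[OF a] .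
  moreover have "s2 + \<rho>* s1 = uh" using Q1(2)[OF b] .
  ultimately show "t = th \<and> s1 = s1h \<and> s2 = s2h" using uh by auto
qed

lemma min_endpoint:
  fixes \<rho> \<mu>1 \<mu>2 \<sigma>1 \<sigma>2 q \<delta> sp G x th t :: real
  assumes r: "-1 < \<rho>" "\<rho> < 1" and q: "1 + q > 0" and G: "q*G > 0"
    and th: "th = x*\<sigma>1*(1-q*0)/((1+q)*(q*G*(1+0) - (1+q)*x*0))"
  shows "Phi \<rho> \<mu>1 \<mu>2 \<sigma>1 \<sigma>2 q \<delta> sp G x 0 th 0 0 \<le> Phi \<rho> \<mu>1 \<mu>2 \<sigma>1 \<sigma>2 q \<delta> sp G x 0 t 0 0"
    and "Phi \<rho> \<mu>1 \<mu>2 \<sigma>1 \<sigma>2 q \<delta> sp G x 0 t 0 0 \<le> Phi \<rho> \<mu>1 \<mu>2 \<sigma>1 \<sigma>2 q \<delta> sp G x 0 th 0 0 \<Longrightarrow> t = th"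
proof -
  have r2: "1 - \<rho>^2 > 0" using r by (simp add: abs_square_less_1)
  define k where "k = (1-\<rho>^2)*(q*(1+q)*G/2)"
  have kpos: "k > 0" unfolding k_def using r2 q G
    by (metis mult_pos_pos half_gt_zero mult.assoc mult.commute)
  have hq: "(1+q)*(q*G) \<noteq> 0" using q G by (metis mult_eq_0_iff less_irrefl)
  have st: "2*k*th + (1-\<rho>^2)*(-x*\<sigma>1) = 0" unfolding k_def th using hq r2
    by (simp add: field_simps)
  have PS: "\<And>t. Phi \<rho> \<mu>1 \<mu>2 \<sigma>1 \<sigma>2 q \<delta> sp G x 0 t 0 0 = (k*t^2 + ((1-\<rho>^2)*(-x*\<sigma>1))*t)
      + (-(1+q)*\<delta>*G + q*(1+q)/2*G*(\<mu>2/\<sigma>2)^2 - x*(\<rho>*(\<mu>2/\<sigma>2)*\<sigma>1 - \<mu>1) + sp)"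
    unfolding Phi_split k_def by (simp add: algebra_simps)
  note Q = quad1[OF kpos st]
  show "Phi \<rho> \<mu>1 \<mu>2 \<sigma>1 \<sigma>2 q \<delta> sp G x 0 th 0 0 \<le> Phi \<rho> \<mu>1 \<mu>2 \<sigma>1 \<sigma>2 q \<delta> sp G x 0 t 0 0"
    unfolding PS using Q(1) by simp
  assume "Phi \<rho> \<mu>1 \<mu>2 \<sigma>1 \<sigma>2 q \<delta> sp G x 0 t 0 0 \<le> Phi \<rho> \<mu>1 \<mu>2 \<sigma>1 \<sigma>2 q \<delta> sp G x 0 th 0 0"
  thus "t = th" unfolding PS using Q(2) by simp
qed



definition thF :: "real \<Rightarrow> real \<Rightarrow> real \<Rightarrow> real \<Rightarrow> real \<Rightarrow> real" where
  "thF q \<sigma>1 G D x = x*\<sigma>1*(1-q*D)/((1+q)*(q*G*(1+D) - (1+q)*x*D))"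
definition s1F :: "real \<Rightarrow> real \<Rightarrow> real \<Rightarrow> real \<Rightarrow> real \<Rightarrow> real" where
  "s1F q \<sigma>1 G D x = D*(((1+q)*thF q \<sigma>1 G D x - \<sigma>1)/(1+D))"
definition s2F :: "real \<Rightarrow> real \<Rightarrow> real \<Rightarrow> real \<Rightarrow> real \<Rightarrow> real \<Rightarrow> real \<Rightarrow> real \<Rightarrow> real" where
  "s2F \<rho> \<mu>2 \<sigma>1 \<sigma>2 q G D x = ((\<mu>2/\<sigma>2)*(1+q) - \<rho>*\<sigma>1)*D/(1+D) - \<rho>* s1F q \<sigma>1 G D x"
definition mF where
  "mF \<rho> \<mu>1 \<mu>2 \<sigma>1 \<sigma>2 q G D x = Mf \<rho> \<mu>1 \<mu>2 \<sigma>1 \<sigma>2 (thF q \<sigma>1 G D x) (s1F q \<sigma>1 G D x) (s2F \<rho> \<mu>2 \<sigma>1 \<sigma>2 q G D x)"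

lemma gamma_zero:
  assumes "-1 < \<rho>" "\<rho> < 1" "gamma \<rho> s1 s2 = 0"
  shows "s1 = 0 \<and> s2 = 0"
proof -
  have r2: "1 - \<rho>^2 > 0" using assms by (simp add: abs_square_less_1)
  have "(s2 + \<rho>* s1)^2 + (1-\<rho>^2)* s1^2 = 0" using assms(3) unfolding gamma_def by (simp add: algebra_simps power2_eq_square)
  hence "(s2 + \<rho>* s1)^2 = 0" "(1-\<rho>^2)* s1^2 = 0" using r2 by (smt (verit) mult_nonneg_nonneg zero_le_power2)+
  thus ?thesis using r2 by auto
qed

lemma pointwise:
  fixes \<rho> \<mu>1 \<mu>2 \<sigma>1 \<sigma>2 q p \<delta> G D x :: real
  assumes r: "-1 < \<rho>" "\<rho> < 1" and pos: "\<sigma>1 > 0" "\<sigma>2 > 0" and q: "1 + q > 0" "q = qq p"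
    and G: "q*G > 0" and D1: "1 + D > 0" and N: "q*G*(1+D) - (1+q)*x*D > 0"
    and GD: "q*(G - x*D) > 0" and Dx: "D \<noteq> 0 \<Longrightarrow> x / D > 0"
  defines "th \<equiv> thF q \<sigma>1 G D x" and "sh1 \<equiv> s1F q \<sigma>1 G D x" and "sh2 \<equiv> s2F \<rho> \<mu>2 \<sigma>1 \<sigma>2 q G D x"
    and "mh \<equiv> mF \<rho> \<mu>1 \<mu>2 \<sigma>1 \<sigma>2 q G D x"
  shows "sh1 \<noteq> - \<sigma>1"
    and "theta1 \<rho> \<mu>1 \<mu>2 \<sigma>1 \<sigma>2 mh sh1 sh2 = th"
    and "\<And>m s1 s2. s1 \<noteq> - \<sigma>1 \<Longrightarrow> G2obj \<rho> \<mu>1 \<mu>2 \<sigma>1 \<sigma>2 p \<delta> G D x mh sh1 sh2 \<le> G2obj \<rho> \<mu>1 \<mu>2 \<sigma>1 \<sigma>2 p \<delta> G D x m s1 s2"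
    and "\<And>m s1 s2. s1 \<noteq> - \<sigma>1 \<Longrightarrow> G2obj \<rho> \<mu>1 \<mu>2 \<sigma>1 \<sigma>2 p \<delta> G D x m s1 s2 \<le> G2obj \<rho> \<mu>1 \<mu>2 \<sigma>1 \<sigma>2 p \<delta> G D x mh sh1 sh2
           \<Longrightarrow> m = mh \<and> s1 = sh1 \<and> s2 = sh2"
proof -
  define N where "N = q*G*(1+D) - (1+q)*x*D"
  have Np: "N > 0" using N N_def by simp
  have r2: "1 - \<rho>^2 > 0" using r by (simp add: abs_square_less_1)
  have r2': "1 - \<rho>^2 \<noteq> 0" using r2 by simp
  have s2ne: "\<sigma>2 \<noteq> 0" using pos by simp
  have th': "th = x*\<sigma>1*(1-q*D)/((1+q)*N)" unfolding th_def thF_def N_def ..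
  have sh1': "sh1 = D*(((1+q)*th - \<sigma>1)/(1+D))" unfolding sh1_def s1F_def th_def ..
  have sh2': "sh2 = ((\<mu>2/\<sigma>2)*(1+q) - \<rho>*\<sigma>1)*D/(1+D) - \<rho>* sh1" unfolding sh2_def s2F_def sh1_def ..
  have mh': "mh = Mf \<rho> \<mu>1 \<mu>2 \<sigma>1 \<sigma>2 th sh1 sh2" unfolding mh_def mF_def th_def sh1_def sh2_def ..
  have thN: "(1+q)*N*th = x*\<sigma>1*(1-q*D)" unfolding th' using q Np by simp
  have e1: "(1+D)*(sh1 + \<sigma>1) = D*(1+q)*th + \<sigma>1" unfolding sh1' using D1
    by (simp add: field_simps)
  have e2: "N*(D*(1+q)*th + \<sigma>1) = \<sigma>1*(q*(1+D)*(G - x*D))"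
  proof -
    have "N*(D*(1+q)*th + \<sigma>1) = D*((1+q)*N*th) + \<sigma>1*N" by (simp add: algebra_simps)
    also have "\<dots> = D*(x*\<sigma>1*(1-q*D)) + \<sigma>1*N" unfolding thN ..
    also have "\<dots> = \<sigma>1*(q*(1+D)*(G - x*D))" unfolding N_def by (simp add: algebra_simps)
    finally show ?thesis .
  qed
  have "\<sigma>1*(q*(1+D)*(G - x*D)) > 0"
  proof -
    have "q*(1+D)*(G - x*D) = (1+D)*(q*(G - x*D))" by simp
    hence "q*(1+D)*(G - x*D) > 0" using D1 GD by (metis mult_pos_pos)
    thus ?thesis using pos by (simp add: mult_pos_pos)
  qed
  hence "sh1 + \<sigma>1 \<noteq> 0" using e1 e2 by (metis mult_zero_right less_irrefl)
  thus sne: "sh1 \<noteq> - \<sigma>1" by linarith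
  have sne': "sh1 + \<sigma>1 \<noteq> 0" using sne by linarith
  show tht: "theta1 \<rho> \<mu>1 \<mu>2 \<sigma>1 \<sigma>2 mh sh1 sh2 = th" unfolding mh' by (rule theta_M[OF sne' s2ne r2'])
  let ?obj = "\<lambda>cp m s1 s2. - alpha \<rho> \<mu>1 \<mu>2 \<sigma>1 \<sigma>2 q \<delta> m s1 s2 * G - (m + beta \<rho> \<mu>1 \<mu>2 \<sigma>1 \<sigma>2 q m s1 s2) * x
          + gamma \<rho> s1 s2 * cp + sgn p"
  have objP: "?obj cp m s1 s2 = Phi \<rho> \<mu>1 \<mu>2 \<sigma>1 \<sigma>2 q \<delta> (sgn p) G x cp (theta1 \<rho> \<mu>1 \<mu>2 \<sigma>1 \<sigma>2 m s1 s2) s1 s2"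
    if "s1 \<noteq> - \<sigma>1" for cp m s1 s2
    by (rule obj_Phi) (use that s2ne r2' in auto)
  have mback: "m = Mf \<rho> \<mu>1 \<mu>2 \<sigma>1 \<sigma>2 (theta1 \<rho> \<mu>1 \<mu>2 \<sigma>1 \<sigma>2 m s1 s2) s1 s2" if "s1 \<noteq> - \<sigma>1" for m s1 s2
    by (rule m_eq) (use that s2ne r2' in auto)
  have G2D: "G2obj \<rho> \<mu>1 \<mu>2 \<sigma>1 \<sigma>2 p \<delta> G D x m s1 s2 = ereal (?obj (x/D) m s1 s2)" if "D \<noteq> 0" for m s1 s2
    unfolding G2obj_def Let_def q(2) using that by simp
  have G2Z: "G2obj \<rho> \<mu>1 \<mu>2 \<sigma>1 \<sigma>2 p \<delta> G D x m s1 s2 =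
      (if gamma \<rho> s1 s2 = 0 then ereal (?obj 0 m s1 s2) else PInfty)" if "D = 0" for m s1 s2
    unfolding G2obj_def Let_def q(2) using that by simp
  show "G2obj \<rho> \<mu>1 \<mu>2 \<sigma>1 \<sigma>2 p \<delta> G D x mh sh1 sh2 \<le> G2obj \<rho> \<mu>1 \<mu>2 \<sigma>1 \<sigma>2 p \<delta> G D x m s1 s2"
    if s1: "s1 \<noteq> - \<sigma>1" for m s1 s2
  proof (cases "D = 0")
    case False
    note MI = min_interior[OF r pos(2) q(1) False Dx[OF False] D1 Np N_def th' sh1' sh2']
    show ?thesis unfolding G2D[OF False] objP[OF s1] objP[OF sne] tht using MI(1) by simp
  next
    case True
    have z: "sh1 = 0" "sh2 = 0" unfolding sh1' sh2' True by simp_all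
    have gz: "gamma \<rho> 0 0 = 0" unfolding gamma_def by simp
    show ?thesis
    proof (cases "gamma \<rho> s1 s2 = 0")
      case False thus ?thesis unfolding G2Z[OF True] by simp
    next
      case g0: True
      hence z2: "s1 = 0" "s2 = 0" using gamma_zero r by blast+
      have th0: "th = x*\<sigma>1*(1-q*0)/((1+q)*(q*G*(1+0) - (1+q)*x*0))" unfolding th' N_def True ..
      note ME = min_endpoint[OF r q(1) G th0]
      have A: "?obj 0 mh 0 0 = Phi \<rho> \<mu>1 \<mu>2 \<sigma>1 \<sigma>2 q \<delta> (sgn p) G x 0 th 0 0"
        using objP[of sh1 mh sh2 0, OF sne] z tht by simp
      have B: "?obj 0 m 0 0 = Phi \<rho> \<mu>1 \<mu>2 \<sigma>1 \<sigma>2 q \<delta> (sgn p) G x 0 (theta1 \<rho> \<mu>1 \<mu>2 \<sigma>1 \<sigma>2 m 0 0) 0 0"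
        using objP[of s1 m s2 0, OF s1] z2 by simp
      have C: "Phi \<rho> \<mu>1 \<mu>2 \<sigma>1 \<sigma>2 q \<delta> (sgn p) G x 0 th 0 0
          \<le> Phi \<rho> \<mu>1 \<mu>2 \<sigma>1 \<sigma>2 q \<delta> (sgn p) G x 0 (theta1 \<rho> \<mu>1 \<mu>2 \<sigma>1 \<sigma>2 m 0 0) 0 0"
        by (rule ME(1))
      show ?thesis unfolding G2Z[OF True] z z2 gz using A B C by simp
    qed
  qed
  show "m = mh \<and> s1 = sh1 \<and> s2 = sh2"
    if s1: "s1 \<noteq> - \<sigma>1" and le: "G2obj \<rho> \<mu>1 \<mu>2 \<sigma>1 \<sigma>2 p \<delta> G D x m s1 s2 \<le> G2obj \<rho> \<mu>1 \<mu>2 \<sigma>1 \<sigma>2 p \<delta> G D x mh sh1 sh2"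
    for m s1 s2
  proof (cases "D = 0")
    case False
    note MI = min_interior[OF r pos(2) q(1) False Dx[OF False] D1 Np N_def th' sh1' sh2']
    have "theta1 \<rho> \<mu>1 \<mu>2 \<sigma>1 \<sigma>2 m s1 s2 = th \<and> s1 = sh1 \<and> s2 = sh2"
      apply (rule MI(2)) using le unfolding G2D[OF False] objP[OF s1] objP[OF sne] tht by simp
    thus ?thesis using mback[OF s1] mh' by metis
  next
    case True
    have z: "sh1 = 0" "sh2 = 0" unfolding sh1' sh2' True by simp_all
    have gz: "gamma \<rho> 0 0 = 0" unfolding gamma_def by simp
    have g0: "gamma \<rho> s1 s2 = 0"
    proof (rule ccontr)
      assume "gamma \<rho> s1 s2 \<noteq> 0"
      thus False using le unfolding G2Z[OF True] z gz by simp
    qed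
    hence z2: "s1 = 0" "s2 = 0" using gamma_zero r by blast+
    have th0: "th = x*\<sigma>1*(1-q*0)/((1+q)*(q*G*(1+0) - (1+q)*x*0))" unfolding th' N_def True ..
    note ME = min_endpoint[OF r q(1) G th0]
    have "theta1 \<rho> \<mu>1 \<mu>2 \<sigma>1 \<sigma>2 m 0 0 = th"
    proof (rule ME(2))
      have A: "?obj 0 mh 0 0 = Phi \<rho> \<mu>1 \<mu>2 \<sigma>1 \<sigma>2 q \<delta> (sgn p) G x 0 th 0 0"
        using objP[of sh1 mh sh2 0, OF sne] z tht by simp
      have B: "?obj 0 m 0 0 = Phi \<rho> \<mu>1 \<mu>2 \<sigma>1 \<sigma>2 q \<delta> (sgn p) G x 0 (theta1 \<rho> \<mu>1 \<mu>2 \<sigma>1 \<sigma>2 m 0 0) 0 0"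
        using objP[of s1 m s2 0, OF s1] z2 by simp
      show "Phi \<rho> \<mu>1 \<mu>2 \<sigma>1 \<sigma>2 q \<delta> (sgn p) G x 0 (theta1 \<rho> \<mu>1 \<mu>2 \<sigma>1 \<sigma>2 m 0 0) 0 0
          \<le> Phi \<rho> \<mu>1 \<mu>2 \<sigma>1 \<sigma>2 q \<delta> (sgn p) G x 0 th 0 0"
        using le A B unfolding G2Z[OF True] z z2 gz by simp
    qed
    thus ?thesis using mback[OF s1] mh' z z2 by metis
  qed
qed


lemma pointwise2:
  fixes \<rho> \<mu>1 \<mu>2 \<sigma>1 \<sigma>2 q p \<delta> G D x :: real
  assumes r: "-1 < \<rho>" "\<rho> < 1" and pos: "\<sigma>1 > 0" "\<sigma>2 > 0" and q: "1 + q > 0" "q = qq p"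
    and G: "q*G > 0" and D1: "1 + D > 0" and N: "q*G*(1+D) - (1+q)*x*D > 0"
    and GD: "q*(G - x*D) > 0" and Dx: "D \<noteq> 0 \<Longrightarrow> x / D > 0"
  shows "s1F q \<sigma>1 G D x \<noteq> - \<sigma>1 \<and> theta1 \<rho> \<mu>1 \<mu>2 \<sigma>1 \<sigma>2 (mF \<rho> \<mu>1 \<mu>2 \<sigma>1 \<sigma>2 q G D x) (s1F q \<sigma>1 G D x) (s2F \<rho> \<mu>2 \<sigma>1 \<sigma>2 q G D x) = thF q \<sigma>1 G D x
    \<and> (\<forall>m s1 s2. s1 \<noteq> - \<sigma>1 \<longrightarrow> G2obj \<rho> \<mu>1 \<mu>2 \<sigma>1 \<sigma>2 p \<delta> G D x (mF \<rho> \<mu>1 \<mu>2 \<sigma>1 \<sigma>2 q G D x) (s1F q \<sigma>1 G D x) (s2F \<rho> \<mu>2 \<sigma>1 \<sigma>2 q G D x)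
                  \<le> G2obj \<rho> \<mu>1 \<mu>2 \<sigma>1 \<sigma>2 p \<delta> G D x m s1 s2)
    \<and> (\<forall>m s1 s2. s1 \<noteq> - \<sigma>1 \<longrightarrow> G2obj \<rho> \<mu>1 \<mu>2 \<sigma>1 \<sigma>2 p \<delta> G D x m s1 s2
                  \<le> G2obj \<rho> \<mu>1 \<mu>2 \<sigma>1 \<sigma>2 p \<delta> G D x (mF \<rho> \<mu>1 \<mu>2 \<sigma>1 \<sigma>2 q G D x) (s1F q \<sigma>1 G D x) (s2F \<rho> \<mu>2 \<sigma>1 \<sigma>2 q G D x)
                  \<longrightarrow> m = mF \<rho> \<mu>1 \<mu>2 \<sigma>1 \<sigma>2 q G D x \<and> s1 = s1F q \<sigma>1 G D x \<and> s2 = s2F \<rho> \<mu>2 \<sigma>1 \<sigma>2 q G D x)"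
proof -
  note A = pointwise(1)[OF assms]
  note B = pointwise(2)[where ?\<mu>1.0=\<mu>1 and ?\<mu>2.0=\<mu>2, OF assms]
  note C = pointwise(3)[where ?\<mu>1.0=\<mu>1 and ?\<mu>2.0=\<mu>2 and \<delta>=\<delta> and p=p, OF assms]
  note E = pointwise(4)[where ?\<mu>1.0=\<mu>1 and ?\<mu>2.0=\<mu>2 and \<delta>=\<delta> and p=p, OF assms]
  show ?thesis using A B C E by simp
qed



theorem corollary4p2:
  fixes \<rho> \<mu>1 \<mu>2 \<sigma>1 \<sigma>2 lamO lamU p \<delta> xl xu :: real
    and g g' g'' :: "real \<Rightarrow> real"
  assumes rho: "-1 < \<rho>" "\<rho> < 1"
    and pos: "\<mu>1 > 0" "\<mu>2 > 0" "\<sigma>1 > 0" "\<sigma>2 > 0"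
    and lam: "lamO > 0" "0 < lamU" "lamU < 1"
    and p: "p < 1" "p \<noteq> 0"
    and delta: "\<delta> > qq p / (2 * (1 - \<rho>^2)) *
                  ((\<mu>1/\<sigma>1)^2 + (\<mu>2/\<sigma>2)^2 - 2 * \<rho> * \<mu>1 * \<mu>2 / (\<sigma>1 * \<sigma>2))"
    and nd1: "\<mu>1 \<noteq> \<rho> * \<mu>2 * \<sigma>1 / \<sigma>2"
    and nd2: "\<mu>2 \<noteq> \<rho> * \<sigma>1 * \<sigma>2 / (1 + qq p)"
    and xlu: "xl < xu"
    and C2: "\<forall>x\<in>{xl..xu}. (g has_real_derivative g' x) (at x within {xl..xu})"
            "\<forall>x\<in>{xl..xu}. (g' has_real_derivative g'' x) (at x within {xl..xu})"
            "continuous_on {xl..xu} g''"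
    and G1: "\<mu>1 > \<rho> * \<mu>2 * \<sigma>1 / \<sigma>2 \<longrightarrow> 0 < xl"
            "\<mu>1 < \<rho> * \<mu>2 * \<sigma>1 / \<sigma>2 \<longrightarrow> xu < 0"
    and G2: "\<forall>x\<in>{xl..xu}.
               (INF v\<in>{(m, s1, s2). s1 \<noteq> - \<sigma>1}.
                  (case v of (m, s1, s2) \<Rightarrow> G2obj \<rho> \<mu>1 \<mu>2 \<sigma>1 \<sigma>2 p \<delta> (g x) (g' x) x m s1 s2)) = 0"
    and G3: "g' xl = 0" "g' xu = 0"
            "((\<lambda>x. g' x / x) has_integral ln ((1 + lamO) / (1 - lamU))) {xl..xu}"
    and G4: "\<forall>x\<in>{xl..xu}. qq p * g x > 0
               \<and> qq p * g x * (g' x + 1) - (1 + qq p) * x * g' x > 0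
               \<and> qq p * (g x - x * g' x) > 0
               \<and> g' x + 1 > 0"
    and G5: "\<forall>x\<in>{xl<..<xu}. g' x / x > 0"
  shows "\<exists>mh s1h s2h :: real \<Rightarrow> real.
     (\<forall>x\<in>{xl..xu}. \<forall>m s1 s2.
        (s1 \<noteq> - \<sigma>1 \<and>
         (\<forall>m' s1' s2'. s1' \<noteq> - \<sigma>1 \<longrightarrow>
            G2obj \<rho> \<mu>1 \<mu>2 \<sigma>1 \<sigma>2 p \<delta> (g x) (g' x) x m s1 s2
              \<le> G2obj \<rho> \<mu>1 \<mu>2 \<sigma>1 \<sigma>2 p \<delta> (g x) (g' x) x m' s1' s2'))
        \<longleftrightarrow> (m = mh x \<and> s1 = s1h x \<and> s2 = s2h x))
   \<and> (let ah = (\<lambda>x. alpha \<rho> \<mu>1 \<mu>2 \<sigma>1 \<sigma>2 (qq p) \<delta> (mh x) (s1h x) (s2h x));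
          bh = (\<lambda>x. beta \<rho> \<mu>1 \<mu>2 \<sigma>1 \<sigma>2 (qq p) (mh x) (s1h x) (s2h x));
          ch = (\<lambda>x. gamma \<rho> (s1h x) (s2h x));
          t1h = (\<lambda>x. theta1 \<rho> \<mu>1 \<mu>2 \<sigma>1 \<sigma>2 (mh x) (s1h x) (s2h x));
          t2h = (\<lambda>x. theta2 \<rho> \<mu>1 \<mu>2 \<sigma>1 \<sigma>2 (mh x) (s1h x) (s2h x))
      in (\<exists>L. L-lipschitz_on {xl..xu} ah)
       \<and> (\<exists>L. L-lipschitz_on {xl..xu} bh)
       \<and> (\<exists>L. L-lipschitz_on {xl..xu} ch)
       \<and> (\<exists>L. L-lipschitz_on {xl..xu} t1h)
       \<and> (\<exists>L. L-lipschitz_on {xl..xu} t2h)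
       \<and> (\<exists>L. L-lipschitz_on {xl<..<xu} (\<lambda>x. s1h x / g' x))
       \<and> (\<exists>L. L-lipschitz_on {xl<..<xu} (\<lambda>x. s2h x / g' x))
       \<and> (\<exists>L. L-lipschitz_on {xl<..<xu} (\<lambda>x. bh x / g' x))
       \<and> (\<forall>x\<in>{xl<..<xu}.
            - ah x * g' x - (mh x + bh x) + ch x * deriv (\<lambda>y. y / g' y) x = 0))"
proof -
  define q where "q = qq p"
  have q1: "1 + q > 0"
  proof -
    have "1 + q = 1/(1-p)" unfolding q_def qq_def using p(1) by (simp add: field_simps)
    thus ?thesis using p(1) by simp
  qed
  define S where "S = {xl..xu}"
  have cS: "compact S" unfolding S_def by simp
  have hG: "q * g x > 0" if "x \<in> S" for x using G4 that unfolding S_def q_def by blast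
  have hD1: "1 + g' x > 0" if "x \<in> S" for x
  proof -
    have "g' x + 1 > 0" using G4 that unfolding S_def by blast
    thus ?thesis by linarith
  qed
  have hN: "q * g x * (1 + g' x) - (1 + q) * x * g' x > 0" if "x \<in> S" for x
  proof -
    have "qq p * g x * (g' x + 1) - (1 + qq p) * x * g' x > 0" using G4 that unfolding S_def by blast
    thus ?thesis unfolding q_def by (simp add: add.commute)
  qed
  have hGD: "q * (g x - x * g' x) > 0" if "x \<in> S" for x using G4 that unfolding S_def q_def by blast
  have hint: "x \<in> {xl<..<xu}" if "x \<in> S" "g' x \<noteq> 0" for x
    using that G3(1,2) unfolding S_def by (cases "x = xl"; cases "x = xu") auto
  have hDx: "x / g' x > 0" if "x \<in> S" "g' x \<noteq> 0" for x
  proof -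
    have "g' x / x > 0" using G5 hint[OF that] by blast
    thus ?thesis by (auto simp add: zero_less_divide_iff)
  qed
  define th where "th = (\<lambda>x. thF q \<sigma>1 (g x) (g' x) x)"
  define mh where "mh = (\<lambda>x. mF \<rho> \<mu>1 \<mu>2 \<sigma>1 \<sigma>2 q (g x) (g' x) x)"
  define s1h where "s1h = (\<lambda>x. s1F q \<sigma>1 (g x) (g' x) x)"
  define s2h where "s2h = (\<lambda>x. s2F \<rho> \<mu>2 \<sigma>1 \<sigma>2 q (g x) (g' x) x)"
  have PW: "s1h x \<noteq> - \<sigma>1 \<and> theta1 \<rho> \<mu>1 \<mu>2 \<sigma>1 \<sigma>2 (mh x) (s1h x) (s2h x) = th x
    \<and> (\<forall>m s1 s2. s1 \<noteq> - \<sigma>1 \<longrightarrow> G2obj \<rho> \<mu>1 \<mu>2 \<sigma>1 \<sigma>2 p \<delta> (g x) (g' x) x (mh x) (s1h x) (s2h x)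
                  \<le> G2obj \<rho> \<mu>1 \<mu>2 \<sigma>1 \<sigma>2 p \<delta> (g x) (g' x) x m s1 s2)
    \<and> (\<forall>m s1 s2. s1 \<noteq> - \<sigma>1 \<longrightarrow> G2obj \<rho> \<mu>1 \<mu>2 \<sigma>1 \<sigma>2 p \<delta> (g x) (g' x) x m s1 s2
                  \<le> G2obj \<rho> \<mu>1 \<mu>2 \<sigma>1 \<sigma>2 p \<delta> (g x) (g' x) x (mh x) (s1h x) (s2h x)
                  \<longrightarrow> m = mh x \<and> s1 = s1h x \<and> s2 = s2h x)"
    if x: "x \<in> S" for x
  proof -
    show ?thesis unfolding th_def mh_def s1h_def s2h_def
      by (rule pointwise2[OF rho pos(3,4) q1 q_def hG[OF x] hD1[OF x] hN[OF x] hGD[OF x] hDx[OF x]])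
  qed
  have part1: "\<forall>x\<in>{xl..xu}. \<forall>m s1 s2.
        (s1 \<noteq> - \<sigma>1 \<and>
         (\<forall>m' s1' s2'. s1' \<noteq> - \<sigma>1 \<longrightarrow>
            G2obj \<rho> \<mu>1 \<mu>2 \<sigma>1 \<sigma>2 p \<delta> (g x) (g' x) x m s1 s2
              \<le> G2obj \<rho> \<mu>1 \<mu>2 \<sigma>1 \<sigma>2 p \<delta> (g x) (g' x) x m' s1' s2'))
        \<longleftrightarrow> (m = mh x \<and> s1 = s1h x \<and> s2 = s2h x)"
  proof (intro ballI allI iffI)
    fix x m s1 s2 assume x: "x \<in> {xl..xu}"
    hence xS: "x \<in> S" unfolding S_def .
    {
      assume a: "s1 \<noteq> - \<sigma>1 \<and> (\<forall>m' s1' s2'. s1' \<noteq> - \<sigma>1 \<longrightarrow>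
            G2obj \<rho> \<mu>1 \<mu>2 \<sigma>1 \<sigma>2 p \<delta> (g x) (g' x) x m s1 s2
              \<le> G2obj \<rho> \<mu>1 \<mu>2 \<sigma>1 \<sigma>2 p \<delta> (g x) (g' x) x m' s1' s2')"
      show "m = mh x \<and> s1 = s1h x \<and> s2 = s2h x" using PW[OF xS] a by blast
    }
    {
      assume "m = mh x \<and> s1 = s1h x \<and> s2 = s2h x"
      thus "s1 \<noteq> - \<sigma>1 \<and> (\<forall>m' s1' s2'. s1' \<noteq> - \<sigma>1 \<longrightarrow>
            G2obj \<rho> \<mu>1 \<mu>2 \<sigma>1 \<sigma>2 p \<delta> (g x) (g' x) x m s1 s2
              \<le> G2obj \<rho> \<mu>1 \<mu>2 \<sigma>1 \<sigma>2 p \<delta> (g x) (g' x) x m' s1' s2')"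
        using PW[OF xS] by (elim conjE) (hypsubst, blast)
    }
  qed
  have xl_le: "xl \<le> xu" using xlu by simp
  have Lg': "LIP S g'" unfolding S_def by (rule LIP_C1[OF xl_le C2(2) C2(3)])
  have Lg: "LIP S g" unfolding S_def
    by (rule LIP_C1[OF xl_le C2(1) LIP_cont[OF Lg'[unfolded S_def]]])
  have LM: "LIP S f \<Longrightarrow> LIP S h \<Longrightarrow> LIP S (\<lambda>x. f x * h x)" for f h using LIP_mult cS by blast
  have LD: "LIP S f \<Longrightarrow> LIP S h \<Longrightarrow> (\<forall>x\<in>S. h x > 0) \<Longrightarrow> LIP S (\<lambda>x. f x / h x)" for f h
    using LIP_divide cS by blast
  have Lth: "LIP S th"
  proof -
    have "LIP S (\<lambda>x. (x*\<sigma>1*(1-q*g' x)) / ((1+q)*(q*g x*(1+g' x) - (1+q)*x*g' x)))"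
    proof (rule LD)
      show "LIP S (\<lambda>x. x*\<sigma>1*(1-q*g' x))" by (intro LM LIP_diff LIP_add LIP_id LIP_const Lg Lg')
      show "LIP S (\<lambda>x. (1+q)*(q*g x*(1+g' x) - (1+q)*x*g' x))" by (intro LM LIP_diff LIP_add LIP_id LIP_const Lg Lg')
      show "\<forall>x\<in>S. (1+q)*(q*g x*(1+g' x) - (1+q)*x*g' x) > 0" using q1 hN by simp
    qed
    thus ?thesis unfolding th_def thF_def .
  qed
  define w1 where "w1 = (\<lambda>x. ((1+q)*th x - \<sigma>1)/(1+g' x))"
  have Lw1: "LIP S w1" unfolding w1_def
    by (rule LD) (use hD1 in \<open>auto intro!: LM LIP_diff LIP_add LIP_id LIP_const Lg Lg' Lth\<close>)
  have s1w: "s1h x = g' x * w1 x" for x unfolding s1h_def s1F_def w1_def th_def ..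
  have Ls1: "LIP S s1h" by (rule LIP_cong[OF LM[OF Lg' Lw1]]) (simp add: s1w)
  define K2 where "K2 = (\<mu>2/\<sigma>2)*(1+q) - \<rho>*\<sigma>1"
  have s2e: "s2h x = K2*g' x/(1+g' x) - \<rho>* s1h x" for x unfolding s2h_def s2F_def K2_def s1h_def ..
  have LK: "LIP S (\<lambda>x. K2*g' x/(1+g' x))"
    by (rule LD) (use hD1 in \<open>auto intro!: LM LIP_diff LIP_add LIP_id LIP_const Lg Lg'\<close>)
  have Ls2: "LIP S s2h" by (rule LIP_cong[OF LIP_diff[OF LK LM[OF LIP_const[where c=\<rho>] Ls1]]]) (simp add: s2e)
  have thx: "theta1 \<rho> \<mu>1 \<mu>2 \<sigma>1 \<sigma>2 (mh x) (s1h x) (s2h x) = th x" if "x \<in> S" for x using PW[OF that] by blast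
  have sne: "s1h x \<noteq> - \<sigma>1" if "x \<in> S" for x using PW[OF that] by blast
  have La: "LIP S (\<lambda>x. alpha \<rho> \<mu>1 \<mu>2 \<sigma>1 \<sigma>2 q \<delta> (mh x) (s1h x) (s2h x))"
    apply (rule LIP_cong[where f="\<lambda>x. (1+q)*\<delta> - q*(1+q)/2*((1-\<rho>^2)*(th x * th x) + (\<mu>2/\<sigma>2)^2)"])
     apply (intro LM LIP_diff LIP_add LIP_const Lth)
    by (simp add: alpha_t thx power2_eq_square)
  have Lb: "LIP S (\<lambda>x. beta \<rho> \<mu>1 \<mu>2 \<sigma>1 \<sigma>2 q (mh x) (s1h x) (s2h x))"
    apply (rule LIP_cong[where f="\<lambda>x. q*((1-\<rho>^2)* s1h x*th x + (\<mu>2/\<sigma>2)*(\<rho>* s1h x + s2h x))"])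
     apply (intro LM LIP_diff LIP_add LIP_const Lth Ls1 Ls2)
    by (simp add: beta_t thx)
  have Lc: "LIP S (\<lambda>x. gamma \<rho> (s1h x) (s2h x))"
    apply (rule LIP_cong[where f="\<lambda>x. (s1h x * s1h x + s2h x * s2h x + 2*\<rho>* s1h x* s2h x) * (1/2)"])
     apply (intro LM LIP_diff LIP_add LIP_const Ls1 Ls2)
    by (simp add: gamma_def power2_eq_square)
  have Lt1: "LIP S (\<lambda>x. theta1 \<rho> \<mu>1 \<mu>2 \<sigma>1 \<sigma>2 (mh x) (s1h x) (s2h x))"
    by (rule LIP_cong[OF Lth]) (simp add: thx)
  have Lt2: "LIP S (\<lambda>x. theta2 \<rho> \<mu>1 \<mu>2 \<sigma>1 \<sigma>2 (mh x) (s1h x) (s2h x))"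
    apply (rule LIP_cong[where f="\<lambda>x. \<mu>2/\<sigma>2 - \<rho> * th x"])
     apply (intro LM LIP_diff LIP_const Lth)
    by (simp add: theta2_def thx)
  define Oi where "Oi = {xl<..<xu}"
  have OiS: "Oi \<subseteq> S" unfolding Oi_def S_def by auto
  have gne: "g' x \<noteq> 0" if "x \<in> Oi" for x using G5 that unfolding Oi_def by fastforce
  have Lw1O: "LIP Oi w1" using LIP_subset[OF Lw1 OiS] .
  have L1g: "LIP S (\<lambda>x. 1 + g' x)" by (intro LIP_add LIP_const Lg')
  have LKS: "LIP S (\<lambda>x. c / (1+g' x))" for c using LD[OF LIP_const L1g] hD1 by blast
  have LKO: "LIP Oi (\<lambda>x. K2/(1+g' x))" using LIP_subset[OF LKS OiS] .
  have Lq1: "LIP Oi (\<lambda>x. s1h x / g' x)"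
    by (rule LIP_cong[OF Lw1O]) (simp add: s1w gne)
  have Lq2: "LIP Oi (\<lambda>x. s2h x / g' x)"
    apply (rule LIP_cong[where f="\<lambda>x. K2/(1+g' x) - \<rho> * w1 x"])
     apply (intro LIP_diff LKO LIP_subset[OF LM[OF LIP_const[where c=\<rho>] Lw1] OiS])
  proof -
    fix x assume x: "x \<in> Oi"
    have d: "g' x \<noteq> 0" using gne[OF x] .
    have "K2*g' x/(1+g' x) = g' x * (K2/(1+g' x))" by simp
    thus "s2h x / g' x = K2/(1+g' x) - \<rho> * w1 x"
      unfolding s2e s1w using d by (simp add: diff_divide_distrib)
  qed
  have Lq3: "LIP Oi (\<lambda>x. beta \<rho> \<mu>1 \<mu>2 \<sigma>1 \<sigma>2 q (mh x) (s1h x) (s2h x) / g' x)"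
  proof (rule LIP_cong[where f="\<lambda>x. q*((1-\<rho>^2)*w1 x*th x + (\<mu>2/\<sigma>2)*(K2/(1+g' x)))"])
    have "LIP S (\<lambda>x. q*((1-\<rho>^2)*w1 x*th x))" by (intro LM LIP_const Lw1 Lth)
    hence A: "LIP Oi (\<lambda>x. q*((1-\<rho>^2)*w1 x*th x))" using LIP_subset OiS by blast
    have "LIP Oi (\<lambda>x. q*((1-\<rho>^2)*w1 x*th x) + q*((\<mu>2/\<sigma>2)*(K2/(1+g' x))))"
      apply (rule LIP_add[OF A])
      using LIP_subset[OF LKS OiS, of "q*((\<mu>2/\<sigma>2)*K2)"] by simp
    thus "LIP Oi (\<lambda>x. q*((1-\<rho>^2)*w1 x*th x + (\<mu>2/\<sigma>2)*(K2/(1+g' x))))"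
      by (simp add: distrib_left)
  next
    fix x assume x: "x \<in> Oi"
    hence xS: "x \<in> S" using OiS by blast
    have "\<rho>* s1h x + s2h x = K2*g' x/(1+g' x)" by (simp add: s2e)
    thus "beta \<rho> \<mu>1 \<mu>2 \<sigma>1 \<sigma>2 q (mh x) (s1h x) (s2h x) / g' x
        = q*((1-\<rho>^2)*w1 x*th x + (\<mu>2/\<sigma>2)*(K2/(1+g' x)))"
      unfolding beta_t thx[OF xS] using gne[OF x] by (simp add: s1w field_simps)
  qed
  have ode: "\<forall>x\<in>Oi. - alpha \<rho> \<mu>1 \<mu>2 \<sigma>1 \<sigma>2 q \<delta> (mh x) (s1h x) (s2h x) * g' x
      - (mh x + beta \<rho> \<mu>1 \<mu>2 \<sigma>1 \<sigma>2 q (mh x) (s1h x) (s2h x))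
      + gamma \<rho> (s1h x) (s2h x) * deriv (\<lambda>y. y / g' y) x = 0"
  proof
    fix x assume x: "x \<in> Oi"
    have xS: "x \<in> S" using x OiS by blast
    define A where "A = alpha \<rho> \<mu>1 \<mu>2 \<sigma>1 \<sigma>2 q \<delta> (mh x) (s1h x) (s2h x)"
    define B where "B = beta \<rho> \<mu>1 \<mu>2 \<sigma>1 \<sigma>2 q (mh x) (s1h x) (s2h x)"
    define C where "C = gamma \<rho> (s1h x) (s2h x)"
    define \<phi> where "\<phi> = (\<lambda>y. - A * g y - (mh x + B) * y + C * (y / g' y) + sgn p)"
    have G2y: "G2obj \<rho> \<mu>1 \<mu>2 \<sigma>1 \<sigma>2 p \<delta> (g y) (g' y) y (mh x) (s1h x) (s2h x) = ereal (\<phi> y)"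
      if "g' y \<noteq> 0" for y
      unfolding G2obj_def Let_def \<phi>_def A_def B_def C_def q_def using that by simp
    have low: "0 \<le> G2obj \<rho> \<mu>1 \<mu>2 \<sigma>1 \<sigma>2 p \<delta> (g y) (g' y) y (mh x) (s1h x) (s2h x)" if y: "y \<in> S" for y
    proof -
      have "(INF v\<in>{(m, s1, s2). s1 \<noteq> - \<sigma>1}.
                  (case v of (m, s1, s2) \<Rightarrow> G2obj \<rho> \<mu>1 \<mu>2 \<sigma>1 \<sigma>2 p \<delta> (g y) (g' y) y m s1 s2))
            \<le> (case (mh x, s1h x, s2h x) of (m, s1, s2) \<Rightarrow> G2obj \<rho> \<mu>1 \<mu>2 \<sigma>1 \<sigma>2 p \<delta> (g y) (g' y) y m s1 s2)"
        by (rule INF_lower) (use sne[OF xS] in auto)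
      thus ?thesis using G2 y unfolding S_def by simp
    qed
    have up: "G2obj \<rho> \<mu>1 \<mu>2 \<sigma>1 \<sigma>2 p \<delta> (g x) (g' x) x (mh x) (s1h x) (s2h x) \<le> 0"
    proof -
      have "G2obj \<rho> \<mu>1 \<mu>2 \<sigma>1 \<sigma>2 p \<delta> (g x) (g' x) x (mh x) (s1h x) (s2h x) \<le> (INF v\<in>{(m, s1, s2). s1 \<noteq> - \<sigma>1}.
                  (case v of (m, s1, s2) \<Rightarrow> G2obj \<rho> \<mu>1 \<mu>2 \<sigma>1 \<sigma>2 p \<delta> (g x) (g' x) x m s1 s2))"
        by (rule INF_greatest) (use PW[OF xS] in auto)
      thus ?thesis using G2 xS unfolding S_def by simp
    qed
    have gx: "g' x \<noteq> 0" using gne[OF x] .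
    have \<phi>x: "\<phi> x \<le> 0" using up G2y[OF gx] by simp
    have \<phi>y: "\<phi> x \<le> \<phi> y" if "y \<in> Oi" for y
    proof -
      have "0 \<le> ereal (\<phi> y)" using low[of y] G2y[OF gne[OF that]] that OiS by auto
      thus ?thesis using \<phi>x by simp
    qed
    have atx: "at x within {xl..xu} = at x" by (rule at_within_interior) (use x in \<open>simp add: Oi_def\<close>)
    have dg: "(g has_real_derivative g' x) (at x)" using C2(1) xS unfolding S_def atx[symmetric] by blast
    have dg': "(g' has_real_derivative g'' x) (at x)" using C2(2) xS unfolding S_def atx[symmetric] by blast
    have dq: "((\<lambda>y. y / g' y) has_real_derivative (1 * g' x - x * g'' x) / (g' x * g' x)) (at x)"
      by (rule DERIV_divide[OF DERIV_ident dg' gx])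
    have d\<phi>: "(\<phi> has_real_derivative (- A * g' x - (mh x + B) * 1 + C * ((1 * g' x - x * g'' x) / (g' x * g' x)) + 0)) (at x)"
      unfolding \<phi>_def by (intro DERIV_add DERIV_diff DERIV_cmult dg dq DERIV_ident DERIV_const)
    define d where "d = min (x - xl) (xu - x)"
    have dpos: "d > 0" using x unfolding d_def Oi_def by auto
    have "- A * g' x - (mh x + B) * 1 + C * ((1 * g' x - x * g'' x) / (g' x * g' x)) + 0 = 0"
    proof (rule DERIV_local_min[OF d\<phi> dpos], intro allI impI)
      fix y assume "\<bar>x - y\<bar> < d"
      hence "y \<in> Oi" unfolding d_def Oi_def by auto
      thus "\<phi> x \<le> \<phi> y" by (rule \<phi>y)
    qed
    moreover have "deriv (\<lambda>y. y / g' y) x = (1 * g' x - x * g'' x) / (g' x * g' x)" by (rule DERIV_imp_deriv[OF dq])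
    ultimately show "- alpha \<rho> \<mu>1 \<mu>2 \<sigma>1 \<sigma>2 q \<delta> (mh x) (s1h x) (s2h x) * g' x
      - (mh x + beta \<rho> \<mu>1 \<mu>2 \<sigma>1 \<sigma>2 q (mh x) (s1h x) (s2h x))
      + gamma \<rho> (s1h x) (s2h x) * deriv (\<lambda>y. y / g' y) x = 0"
      unfolding A_def B_def C_def by simp
  qed
  show ?thesis
    apply (rule exI[of _ mh], rule exI[of _ s1h], rule exI[of _ s2h])
    unfolding Let_def q_def[symmetric] LIP_def[symmetric] S_def[symmetric] Oi_def[symmetric]
    using part1[folded S_def] La Lb Lc Lt1 Lt2 Lq1 Lq2 Lq3 ode by blast
qed


end
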